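(* Consider a run of \textsc{1-2-MinGreedy} on a finite simple undirected graph $G=(V,E)$ producing $M$, and a maximum matching $M^*$ such that each component of $(V,M\cup M^* )$ with an edge is an edge of $M\cap M^*$ or an $M$-$M^*$-path. Let $X$ be an $M$-$M^*$-path created in the step in which $u$ is matched with $v$, and assume that a degree-1 endpoint exists after creation of $X$. Then the node $u'$ selected by the algorithm in the next step is either (a) an $M^*$-neighbor of $u$ or $v$ in $X$, or (b) a neighbor of $u$ or $v$ via an edge of $F$ that belongs to a component $Y\neq X$ of $(V,M\cup M^* )$.
   Context: \textsc{1-2-MinGreedy}: starting with $M=\emptyset$ and until no edges remain in the current graph, if every node has current degree at least $3$ select an arbitrary edge $\{u,v\}$ (call $u$ the selected node), otherwise select an arbitrary node $u$ of minimum non-zero current degree and an arbitrary neighbor $v$; add $\{u,v\}$ to $M$ and remove all edges incident with $u$ or $v$. An $M$-$M^*$-path is a component of $(V,M\cup M^* )$ that is an alternating path starting and ending with an $M^*$-edge, with $m\geq1$ edges of $M$ and $m+1$ edges of $M^*$; its endpoints are its two $M$-uncovered end nodes. The creation step of $X$ is the step in which the first $M$-edge of $X$ is picked. $F=E\setminus(M\cup M^* )$. For an endpoint $w$, an edge $\{v,w\}\in F$ is a transfer from $v$ to $w$ if, in the step in which $v$ is matched, the current degree of $w$ drops to at most $1$; such a transfer is canceled if at the moment $w$ has current degree $1$ with the single remaining edge $\{v,w\}\in F$, $w$ is already the target of two transfers from nodes matched earlier. A debit is a non-canceled transfer. A degree-1 endpoint exists after creation of $X$ if $u$ or $v$ pays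 a debit to some endpoint $w$ and $w$ has current degree exactly $1$ immediately after the creation step. *)

theory Defs
  imports Main
begin

definition simple_graph :: "'a set \<Rightarrow> 'a set set \<Rightarrow> bool" where
  "simple_graph V E \<longleftrightarrow> finite V \<and> (\<forall>e\<in>E. \<exists>a b. e = {a, b} \<and> a \<noteq> b \<and> a \<in> V \<and> b \<in> V)"

definition is_matching :: "'a set set \<Rightarrow> 'a set set \<Rightarrow> bool" where
  "is_matching E M \<longleftrightarrow> M \<subseteq> E \<and> (\<forall>e1\<in>M. \<forall>e2\<in>M. e1 \<noteq> e2 \<longrightarrow> e1 \<inter> e2 = {})"

definition is_max_matching :: "'a set set \<Rightarrow> 'a set set \<Rightarrow> bool" where
  "is_max_matching E M \<longleftrightarrow> is_matching E M \<and>
     (\<forall>M'. is_matching E M' \<longrightarrow> card M' \<le> card M)"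

(* A run is a list of steps (u, v): in step i the selected node u is matched with v.
   cur_edges E run i = edges remaining after the first i steps. *)
definition cur_edges :: "'a set set \<Rightarrow> ('a \<times> 'a) list \<Rightarrow> nat \<Rightarrow> 'a set set" where
  "cur_edges E run i = {e \<in> E. \<forall>j<i. fst (run ! j) \<notin> e \<and> snd (run ! j) \<notin> e}"

definition cur_deg :: "'a set set \<Rightarrow> ('a \<times> 'a) list \<Rightarrow> nat \<Rightarrow> 'a \<Rightarrow> nat" where
  "cur_deg E run i x = card {e \<in> cur_edges E run i. x \<in> e}"

definition legal_step :: "'a set set \<Rightarrow> ('a \<times> 'a) list \<Rightarrow> nat \<Rightarrow> bool" where
  "legal_step E run i \<longleftrightarrow>
     (let u = fst (run ! i); v = snd (run ! i); d = cur_deg E run i in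
       {u, v} \<in> cur_edges E run i \<and>
       (if (\<forall>x. d x \<noteq> 0 \<longrightarrow> 3 \<le> d x) then True
        else (\<forall>x. d x \<noteq> 0 \<longrightarrow> d u \<le> d x)))"

definition min_greedy_run :: "'a set set \<Rightarrow> ('a \<times> 'a) list \<Rightarrow> bool" where
  "min_greedy_run E run \<longleftrightarrow>
     (\<forall>i<length run. legal_step E run i) \<and> cur_edges E run (length run) = {}"

definition run_matching :: "('a \<times> 'a) list \<Rightarrow> 'a set set" where
  "run_matching run = {{fst s, snd s} | s. s \<in> set run}"

definition comp :: "'a set set \<Rightarrow> 'a set set \<Rightarrow> 'a \<Rightarrow> 'a set" where
  "comp M Ms x = {y. (x, y) \<in> {(a, b). {a, b} \<in> M \<union> Ms}\<^sup>*}"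

definition is_MMpath :: "'a set set \<Rightarrow> 'a set set \<Rightarrow> 'a list \<Rightarrow> bool" where
  "is_MMpath M Ms xs \<longleftrightarrow>
     (\<exists>m. m \<ge> 1 \<and> length xs = 2 * m + 2) \<and> distinct xs \<and>
     (\<forall>i. Suc i < length xs \<longrightarrow>
        (if even i then {xs ! i, xs ! Suc i} \<in> Ms - M
                   else {xs ! i, xs ! Suc i} \<in> M - Ms)) \<and>
     (\<forall>e\<in>M. hd xs \<notin> e \<and> last xs \<notin> e) \<and>
     comp M Ms (hd xs) = set xs"

definition MMpath_Medges :: "'a list \<Rightarrow> 'a set set" where
  "MMpath_Medges xs = {{xs ! i, xs ! Suc i} | i. Suc i < length xs \<and> odd i}"

definition is_endpoint :: "'a set set \<Rightarrow> 'a set set \<Rightarrow> 'a \<Rightarrow> bool" where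
  "is_endpoint M Ms w \<longleftrightarrow> (\<exists>xs. is_MMpath M Ms xs \<and> (w = hd xs \<or> w = last xs))"

definition transfer_at :: "'a set set \<Rightarrow> 'a set set \<Rightarrow> ('a \<times> 'a) list \<Rightarrow> nat \<Rightarrow> 'a \<Rightarrow> 'a \<Rightarrow> bool" where
  "transfer_at E Ms run j v w \<longleftrightarrow>
     (let M = run_matching run in
       j < length run \<and> (v = fst (run ! j) \<or> v = snd (run ! j)) \<and>
       is_endpoint M Ms w \<and> {v, w} \<in> E - (M \<union> Ms) \<and>
       cur_deg E run (Suc j) w \<le> 1 \<and> cur_deg E run (Suc j) w < cur_deg E run j w)"

definition canceled_at :: "'a set set \<Rightarrow> 'a set set \<Rightarrow> ('a \<times> 'a) list \<Rightarrow> nat \<Rightarrow> 'a \<Rightarrow> 'a \<Rightarrow> bool" where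
  "canceled_at E Ms run j v w \<longleftrightarrow>
     transfer_at E Ms run j v w \<and>
     {e \<in> cur_edges E run j. w \<in> e} = {{v, w}} \<and>
     2 \<le> card {v'. \<exists>j'<j. transfer_at E Ms run j' v' w}"

definition debit_at :: "'a set set \<Rightarrow> 'a set set \<Rightarrow> ('a \<times> 'a) list \<Rightarrow> nat \<Rightarrow> 'a \<Rightarrow> 'a \<Rightarrow> bool" where
  "debit_at E Ms run j v w \<longleftrightarrow> transfer_at E Ms run j v w \<and> \<not> canceled_at E Ms run j v w"

end

theory Submission
  imports Defs
begin

lemma MM_interior:
  assumes P: "is_MMpath M Ms xs" and y: "y \<in> set xs" and cov: "\<exists>f\<in>M. y \<in> f"
  shows "(\<exists>z\<in>set xs. {y,z} \<in> Ms - M) \<and> (\<exists>f\<in>MMpath_Medges xs \<inter> M. y \<in> f)"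
proof -
  obtain m where m: "m \<ge> 1" "length xs = 2*m+2" using P unfolding is_MMpath_def by blast
  have alt: "\<And>i. Suc i < length xs \<Longrightarrow> (if even i then {xs ! i, xs ! Suc i} \<in> Ms - M
                   else {xs ! i, xs ! Suc i} \<in> M - Ms)" using P unfolding is_MMpath_def by blast
  have ends: "\<forall>e\<in>M. hd xs \<notin> e \<and> last xs \<notin> e" using P unfolding is_MMpath_def by blast
  obtain i where i: "i < length xs" "xs ! i = y" using y by (metis in_set_conv_nth)
  have ne: "xs \<noteq> []" using m by auto
  have i0: "i \<noteq> 0" using ends cov i ne by (metis hd_conv_nth)
  have il: "i \<noteq> length xs - 1" using ends cov i ne by (metis last_conv_nth)
  show ?thesis
  proof (cases "odd i")
    case True
    have a: "{xs ! (i-1), xs ! i} \<in> Ms - M" using alt[of "i-1"] i i0 True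
      by (metis Suc_pred' bot_nat_0.not_eq_extremum even_Suc)
    have b: "{xs ! i, xs ! Suc i} \<in> M - Ms" using alt[of i] i il True by auto
    have c: "{xs ! i, xs ! Suc i} \<in> MMpath_Medges xs" unfolding MMpath_Medges_def
      using i il True by auto
    have z: "xs ! (i-1) \<in> set xs" using i by auto
    show ?thesis using a b c i z by (auto simp: insert_commute intro!: bexI[of _ "xs ! (i-1)"])
  next
    case False
    have a: "{xs ! i, xs ! Suc i} \<in> Ms - M" using alt[of i] i il False by auto
    have b: "{xs ! (i-1), xs ! i} \<in> M - Ms" using alt[of "i-1"] i i0 False
      by (metis Suc_pred' bot_nat_0.not_eq_extremum even_Suc)
    have c: "{xs ! (i-1), xs ! Suc (i-1)} \<in> MMpath_Medges xs" unfolding MMpath_Medges_def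
      using i i0 False by (intro CollectI exI[of _ "i-1"]) auto
    have c': "{xs ! (i-1), xs ! i} \<in> MMpath_Medges xs" using c i0 by simp
    have si: "Suc i < length xs" using i il by auto
    show ?thesis using a b c' i si by (auto intro!: bexI[of _ "xs ! Suc i"])
  qed
qed

theorem lemma11:
  fixes V :: "'a set" and E Ms :: "'a set set" and run :: "('a \<times> 'a) list"
    and xs :: "'a list" and k :: nat
  assumes G: "simple_graph V E"
    and R: "min_greedy_run E run"
    and Mstar: "is_max_matching E Ms"
    and comps: "\<forall>x\<in>V. (\<exists>e\<in>run_matching run \<union> Ms. x \<in> e) \<longrightarrow>
                  (\<exists>e\<in>run_matching run \<inter> Ms. comp (run_matching run) Ms x = e)
                  \<or> (\<exists>ys. is_MMpath (run_matching run) Ms ys \<and> x \<in> set ys)"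
    and X: "is_MMpath (run_matching run) Ms xs"
    and k: "k < length run"
    and creation: "{fst (run ! k), snd (run ! k)} \<in> MMpath_Medges xs"
    and first: "\<forall>j<k. {fst (run ! j), snd (run ! j)} \<notin> MMpath_Medges xs"
    and deg1: "\<exists>w. (debit_at E Ms run k (fst (run ! k)) w \<or> debit_at E Ms run k (snd (run ! k)) w)
                  \<and> cur_deg E run (Suc k) w = 1"
  shows "Suc k < length run \<and>
    (let u = fst (run ! k); v = snd (run ! k); u' = fst (run ! Suc k);
         M = run_matching run in
      (\<exists>x\<in>{u, v}. {x, u'} \<in> Ms \<and> u' \<in> set xs) \<or>
      (\<exists>x\<in>{u, v}. {x, u'} \<in> E - (M \<union> Ms) \<and> comp M Ms u' \<noteq> set xs))"
proof -
  define e where "e j = {fst (run ! j), snd (run ! j)}" for j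
  define M where "M = run_matching run"
  define u where "u = fst (run ! k)"
  define v where "v = snd (run ! k)"
  have finE: "finite E"
  proof -
    have "E \<subseteq> Pow V"
    proof
      fix f assume "f \<in> E"
      then obtain a b where "f = {a,b}" "a \<in> V" "b \<in> V" using G unfolding simple_graph_def by metis
      then show "f \<in> Pow V" by simp
    qed
    moreover have "finite V" using G unfolding simple_graph_def by blast
    ultimately show ?thesis by (meson finite_Pow_iff finite_subset)
  qed
  have legal: "\<And>j. j < length run \<Longrightarrow> e j \<in> cur_edges E run j"
    using R unfolding min_greedy_run_def legal_step_def Let_def e_def by blast
  have disj: "\<And>j j'. j < j' \<Longrightarrow> j' < length run \<Longrightarrow> fst (run!j) \<notin> e j' \<and> snd (run!j) \<notin> e j'"
    using legal unfolding cur_edges_def by blast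
  have same: "\<And>j j' y. j < length run \<Longrightarrow> j' < length run \<Longrightarrow> y \<in> e j \<Longrightarrow> y \<in> e j' \<Longrightarrow> j = j'"
  proof -
    fix j j' y assume a: "j < length run" "j' < length run" "y \<in> e j" "y \<in> e j'"
    show "j = j'"
    proof (rule ccontr)
      assume "j \<noteq> j'"
      then have "j < j' \<or> j' < j" by auto
      then show False using disj[of j j'] disj[of j' j] a unfolding e_def by auto
    qed
  qed
  have Mdef: "\<And>f. f \<in> M \<longleftrightarrow> (\<exists>j<length run. f = e j)"
  proof
    fix f assume "f \<in> M"
    then obtain s where s: "s \<in> set run" "f = {fst s, snd s}" unfolding M_def run_matching_def by blast
    then obtain j where "j < length run" "run ! j = s" by (meson in_set_conv_nth)
    then show "\<exists>j<length run. f = e j" using s unfolding e_def by blast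
  next
    fix f assume "\<exists>j<length run. f = e j"
    then obtain j where j: "j < length run" "f = e j" by blast
    then have "run ! j \<in> set run" by simp
    then show "f \<in> M" using j unfolding M_def run_matching_def e_def by blast
  qed
  have MsE: "Ms \<subseteq> E" using Mstar unfolding is_max_matching_def is_matching_def by blast
  have A: "\<And>y j. y \<in> set xs \<Longrightarrow> j < k \<Longrightarrow> y \<notin> e j"
  proof
    fix y j assume y: "y \<in> set xs" and j: "j < k" and ye: "y \<in> e j"
    have "j < length run" using j k by simp
    then have ejM: "e j \<in> M" using Mdef by blast
    obtain f where f: "f \<in> MMpath_Medges xs" "f \<in> M" "y \<in> f"
      using MM_interior[OF X[folded M_def] y] ejM ye by blast
    obtain j' where j': "j' < length run" "f = e j'" using Mdef f by blast
    have "j = j'" using same[of j j' y] j k j' f ye by auto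
    then show False using first j f j' unfolding e_def by auto
  qed
  have ek_path: "e k \<in> MMpath_Medges xs" using creation e_def by simp
  have uv_in: "u \<in> set xs \<and> v \<in> set xs"
  proof -
    obtain i where i: "e k = {xs ! i, xs ! Suc i}" "Suc i < length xs"
      using ek_path unfolding MMpath_Medges_def by blast
    have "xs ! i \<in> set xs" "xs ! Suc i \<in> set xs" using i(2) by auto
    moreover have "u \<in> e k" "v \<in> e k" unfolding e_def u_def v_def by auto
    ultimately show ?thesis using i(1) by auto
  qed
  then have uv_in: "u \<in> set xs" "v \<in> set xs" by auto
  have ek: "e k \<in> cur_edges E run k" "e k \<in> M" using legal k Mdef by auto
  have cur_Suc: "\<And>i. cur_edges E run (Suc i) = {f \<in> cur_edges E run i. fst (run!i) \<notin> f \<and> snd (run!i) \<notin> f}"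
    unfolding cur_edges_def by (auto simp: less_Suc_eq)
  have curE: "\<And>i. cur_edges E run i \<subseteq> E" unfolding cur_edges_def by (rule Collect_subset)
  have fin: "\<And>i P. finite {f \<in> cur_edges E run i. P f}"
  proof (rule finite_subset[OF _ finE])
    fix i P show "{f \<in> cur_edges E run i. P f} \<subseteq> E" using curE by blast
  qed
  obtain w where w: "cur_deg E run (Suc k) w = 1" using deg1 by blast
  have "{f \<in> cur_edges E run (Suc k). w \<in> f} \<noteq> {}" using w unfolding cur_deg_def by (metis card.empty zero_neq_one)
  then have ne: "cur_edges E run (Suc k) \<noteq> {}" by blast
  have Sk: "Suc k < length run"
  proof (rule ccontr)
    assume "\<not> ?thesis"
    then have "Suc k = length run" using k by auto
    then show False using R ne unfolding min_greedy_run_def by simp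
  qed
  define u' where "u' = fst (run ! Suc k)"
  define v' where "v' = snd (run ! Suc k)"
  define d' where "d' = cur_deg E run (Suc k)"
  have e': "e (Suc k) \<in> cur_edges E run (Suc k)" using legal Sk by blast
  have e'M: "e (Suc k) \<in> M" using Mdef Sk by blast
  have u'e: "u' \<in> e (Suc k)" unfolding u'_def e_def by simp
  have du'pos: "d' u' \<noteq> 0"
  proof -
    have "e (Suc k) \<in> {f \<in> cur_edges E run (Suc k). u' \<in> f}" using e' u'e by simp
    then have "{f \<in> cur_edges E run (Suc k). u' \<in> f} \<noteq> {}" by blast
    then show ?thesis unfolding d'_def cur_deg_def using fin by simp
  qed
  have ls: "legal_step E run (Suc k)" using R Sk unfolding min_greedy_run_def by blast
  have du'le: "d' u' \<le> 1"
  proof -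
    have "\<not> (\<forall>x. d' x \<noteq> 0 \<longrightarrow> 3 \<le> d' x)" using w d'_def by (metis numeral_le_one_iff semiring_norm(70) zero_neq_one)
    then have "\<forall>x. d' x \<noteq> 0 \<longrightarrow> d' u' \<le> d' x"
      using ls unfolding legal_step_def Let_def d'_def u'_def by (simp split: if_splits)
    then show ?thesis using w d'_def by (metis zero_neq_one)
  qed
  have du': "d' u' = 1" using du'pos du'le by auto
  have u'nuv: "u' \<notin> e k" using e' u'e unfolding cur_edges_def e_def by blast
  obtain zu where zu: "zu \<in> set xs" "{u, zu} \<in> Ms - M"
    using MM_interior[OF X[folded M_def] uv_in(1)] ek(2) unfolding e_def u_def by blast
  have exf: "\<exists>f \<in> cur_edges E run k. u' \<in> f \<and> (u \<in> f \<or> v \<in> f)"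
  proof (rule ccontr)
    assume nf: "\<not> ?thesis"
    have eqs: "{f \<in> cur_edges E run k. u' \<in> f} = {f \<in> cur_edges E run (Suc k). u' \<in> f}"
      using nf unfolding cur_Suc u_def v_def by auto
    have dk: "cur_deg E run k u' = 1" using du' eqs unfolding d'_def cur_deg_def by simp
    have lk: "legal_step E run k" using R k unfolding min_greedy_run_def by blast
    have "\<not> (\<forall>x. cur_deg E run k x \<noteq> 0 \<longrightarrow> 3 \<le> cur_deg E run k x)" using dk by (metis numeral_le_one_iff semiring_norm(70) zero_neq_one)
    then have "\<forall>x. cur_deg E run k x \<noteq> 0 \<longrightarrow> cur_deg E run k u \<le> cur_deg E run k x"
      using lk unfolding legal_step_def Let_def u_def by (simp split: if_splits)
    then have dku: "cur_deg E run k u \<le> 1" using dk by (metis zero_neq_one)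
    have zc: "{u, zu} \<in> cur_edges E run k"
      using zu MsE A[OF zu(1)] A[OF uv_in(1)] unfolding cur_edges_def e_def by blast
    have neq: "{u, zu} \<noteq> e k" using zu ek by auto
    have sub: "{{u,zu}, e k} \<subseteq> {f \<in> cur_edges E run k. u \<in> f}" using zc ek unfolding e_def u_def by auto
    have "card {{u,zu}, e k} = 2" using neq by simp
    then have "2 \<le> cur_deg E run k u" unfolding cur_deg_def using card_mono[OF fin sub] by simp
    then show False using dku by simp
  qed
  then obtain f x where f: "f \<in> cur_edges E run k" "u' \<in> f" "x \<in> {u,v}" "x \<in> f" by blast
  have fE: "f \<in> E" using f curE by blast
  have u'x: "u' \<noteq> x" using u'nuv f unfolding e_def u_def v_def by auto
  have fxu: "f = {x, u'}"
  proof -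
    obtain a b where "f = {a,b}" using fE G unfolding simple_graph_def by metis
    then show ?thesis using f u'x by auto
  qed
  have xk: "x \<in> e k" using f unfolding e_def u_def v_def by auto
  have main: "(\<exists>x\<in>{u, v}. {x, u'} \<in> Ms \<and> u' \<in> set xs) \<or>
      (\<exists>x\<in>{u, v}. {x, u'} \<in> E - (M \<union> Ms) \<and> comp M Ms u' \<noteq> set xs)"
  proof (cases "u' \<in> set xs")
    case True
    obtain z where z: "z \<in> set xs" "{u', z} \<in> Ms - M"
      using MM_interior[OF X[folded M_def] True] e'M u'e by blast
    show ?thesis
    proof (cases "z \<in> {u,v}")
      case True
      then obtain x0 where x0: "x0 \<in> {u,v}" "z = x0" by blast
      have "{x0, u'} \<in> Ms" using z x0 by (simp add: insert_commute)
      then show ?thesis using x0 \<open>u' \<in> set xs\<close> by blast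
    next
      case False
      have zE: "{u', z} \<in> E" using z MsE by blast
      have allj: "\<forall>j<Suc k. fst (run!j) \<notin> {u', z} \<and> snd (run!j) \<notin> {u', z}"
      proof (intro allI impI)
        fix j assume j: "j < Suc k"
        have "u' \<notin> e j \<and> z \<notin> e j"
        proof (cases "j < k")
          case True
          then show ?thesis using A[OF z(1)] A[OF \<open>u' \<in> set xs\<close>] by blast
        next
          case False
          then have "j = k" using j by simp
          moreover have "z \<notin> e k" using False \<open>z \<notin> {u,v}\<close> unfolding e_def u_def v_def by simp
          ultimately show ?thesis using u'nuv by simp
        qed
        then show "fst (run!j) \<notin> {u', z} \<and> snd (run!j) \<notin> {u', z}" unfolding e_def by blast
      qed
      have zc: "{u', z} \<in> cur_edges E run (Suc k)"
        unfolding cur_edges_def using zE allj by blast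
      have "card {f \<in> cur_edges E run (Suc k). u' \<in> f} = 1" using du' unfolding d'_def cur_deg_def .
      then obtain g where g: "{f \<in> cur_edges E run (Suc k). u' \<in> f} = {g}" using card_1_singletonE by blast
      have "{u', z} \<in> {g}" using g zc by (metis (mono_tags, lifting) insertI1 mem_Collect_eq)
      moreover have "e (Suc k) \<in> {g}" using g e' u'e by (metis (mono_tags, lifting) mem_Collect_eq)
      ultimately have "{u', z} = e (Suc k)" by simp
      then show ?thesis using z e'M by simp
    qed
  next
    case False
    have nMs: "f \<notin> Ms"
    proof
      assume "f \<in> Ms"
      have cx: "x \<in> comp M Ms (hd xs)" using X f(3) uv_in unfolding is_MMpath_def M_def by auto
      have "u' \<in> comp M Ms (hd xs)" using cx \<open>f \<in> Ms\<close> fxu unfolding comp_def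
        by (auto intro: rtrancl_into_rtrancl)
      then show False using X False unfolding is_MMpath_def M_def by auto
    qed
    have nM: "f \<notin> M"
    proof
      assume "f \<in> M"
      then obtain j where j: "j < length run" "f = e j" using Mdef by blast
      have "j = k" using same[of j k x] j k xk f(4) by blast
      then show False using j f(2) u'nuv by simp
    qed
    have "u' \<in> comp M Ms u'" unfolding comp_def by simp
    then have "comp M Ms u' \<noteq> set xs" using False by blast
    then show ?thesis using f(3) fE nMs nM fxu by blast
  qed
  show ?thesis using Sk main unfolding Let_def u_def v_def u'_def M_def by simp
qed

end
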